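(* Let $\xi$ be a model with $\xi(1)=1$ which is not of the form $\xi(t)=at^2$. Let $m,c>0$ solve $$\xi(1)=\frac1m\Big(\frac1m\log\Big(\frac{c+m}{c}\Big)-\frac1{c+m}\Big),\qquad\frac1{\xi'(1)}=c(c+m),$$ and let $\eta(t)=\xi(1)-\int_t^1\int_0^s\phi(\tau)^{-2}d\tau\,ds$ with $\phi(t)=m(1-t)+c$. Then $\eta''(1)\ge\xi''(1)$ if and only if $\xi$ is pure-like or critical.
   Context: A model is $\xi(t)=\sum_{p\ge2}\beta_p^2t^p$, real $\beta_p$ not all zero, with $\xi(1+\epsilon)<\infty$ for some $\epsilon>0$. With $\nu'=\xi'(1)$, $\nu''=\xi''(1)$, define $ABA=\log(\nu''/\nu')-\frac{(\nu''-\nu')(\nu''-\nu'+\nu'^2)}{\nu''\nu'^2}$; $\xi$ is pure-like if $ABA>0$ and critical if $ABA=0$. *)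

theory Defs
  imports "HOL-Analysis.Analysis"
begin

definition xi :: "(nat \<Rightarrow> real) \<Rightarrow> real \<Rightarrow> real" where
  "xi \<beta> t = (\<Sum>p. (if 2 \<le> p then (\<beta> p)\<^sup>2 * t ^ p else 0))"

definition is_model :: "(nat \<Rightarrow> real) \<Rightarrow> bool" where
  "is_model \<beta> \<longleftrightarrow> (\<exists>p\<ge>2. \<beta> p \<noteq> 0) \<and>
     (\<exists>\<epsilon>>0. summable (\<lambda>p. if 2 \<le> p then (\<beta> p)\<^sup>2 * (1 + \<epsilon>) ^ p else 0))"

definition nu1 :: "(nat \<Rightarrow> real) \<Rightarrow> real" where
  "nu1 \<beta> = deriv (xi \<beta>) 1"

definition nu2 :: "(nat \<Rightarrow> real) \<Rightarrow> real" where
  "nu2 \<beta> = deriv (deriv (xi \<beta>)) 1"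

definition ABA :: "(nat \<Rightarrow> real) \<Rightarrow> real" where
  "ABA \<beta> = ln (nu2 \<beta> / nu1 \<beta>)
     - ((nu2 \<beta> - nu1 \<beta>) * (nu2 \<beta> - nu1 \<beta> + (nu1 \<beta>)\<^sup>2)) / (nu2 \<beta> * (nu1 \<beta>)\<^sup>2)"

definition pure_like :: "(nat \<Rightarrow> real) \<Rightarrow> bool" where
  "pure_like \<beta> \<longleftrightarrow> ABA \<beta> > 0"

definition critical :: "(nat \<Rightarrow> real) \<Rightarrow> bool" where
  "critical \<beta> \<longleftrightarrow> ABA \<beta> = 0"

definition phi :: "real \<Rightarrow> real \<Rightarrow> real \<Rightarrow> real" where
  "phi m c t = m * (1 - t) + c"

definition eta :: "(nat \<Rightarrow> real) \<Rightarrow> real \<Rightarrow> real \<Rightarrow> real \<Rightarrow> real" where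
  "eta \<beta> m c t = xi \<beta> 1 -
     (LBINT s = ereal t..ereal 1. (LBINT \<tau> = ereal 0..ereal s. 1 / (phi m c \<tau>)\<^sup>2))"

end

theory Submission
  imports Defs
begin


definition FF :: "real \<Rightarrow> real \<Rightarrow> real" where
  "FF k r = ln r - (r-1)/r - k*(r-1)^2/r"

lemma FF_deriv: assumes "x > 0"
  shows "(FF k has_real_derivative (x-1)*(1-k*(x+1))/x^2) (at x)"
proof -
  have "((\<lambda>r. ln r - (r-1)/r - k*(r-1)^2/r) has_real_derivative
     1/x - (1*x - (x-1)*1)/x^2 - (k*(2*(x-1)*1)*x - k*(x-1)^2*1)/x^2) (at x)"
    using assms by (auto intro!: derivative_eq_intros simp: power2_eq_square)
  moreover have "1/x - (1*x - (x-1)*1)/x^2 - (k*(2*(x-1)*1)*x - k*(x-1)^2*1)/x^2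
      = (x-1)*(1-k*(x+1))/x^2"
    using assms by (simp add: field_simps power2_eq_square)
  ultimately show ?thesis unfolding FF_def[abs_def] by simp
qed

lemma FF_cont: assumes "0 < a" shows "continuous_on {a..b} (FF k)"
  using assms by (intro continuous_at_imp_continuous_on ballI DERIV_isCont[OF FF_deriv]) auto

lemma FF_dec: assumes "0 < a" "a < b" "\<And>x. a < x \<Longrightarrow> x < b \<Longrightarrow> (x-1)*(1-k*(x+1)) < 0"
  shows "FF k b < FF k a"
proof (rule DERIV_neg_imp_decreasing_open[OF assms(2) _ FF_cont[OF assms(1)]])
  fix x assume "a < x" "x < b"
  then show "\<exists>y. DERIV (FF k) x :> y \<and> y < 0"
    using assms by (intro exI[of _ "(x-1)*(1-k*(x+1))/x^2"] conjI FF_deriv)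
      (auto simp: divide_neg_pos)
qed

lemma FF_inc: assumes "0 < a" "a < b" "\<And>x. a < x \<Longrightarrow> x < b \<Longrightarrow> (x-1)*(1-k*(x+1)) > 0"
  shows "FF k a < FF k b"
proof (rule DERIV_pos_imp_increasing_open[OF assms(2) _ FF_cont[OF assms(1)]])
  fix x assume "a < x" "x < b"
  then show "\<exists>y. DERIV (FF k) x :> y \<and> y > 0"
    using assms by (intro exI[of _ "(x-1)*(1-k*(x+1))/x^2"] conjI FF_deriv) auto
qed

lemma FF1: "FF k 1 = 0" by (simp add: FF_def)

lemma key:
  assumes k: "k > 0" and u: "u > 1" and fu: "FF k u = 0" and r: "r > 0"
  shows "FF k r \<ge> 0 \<longleftrightarrow> r \<le> u"
proof -
  define r0 where "r0 = 1/k - 1"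
  have kr0: "1 - k*(x+1) > 0 \<longleftrightarrow> x < r0" for x
    using k unfolding r0_def by (simp add: field_simps)
  have kr0b: "k*(x+1) < 1 \<longleftrightarrow> x < r0" for x
    using k unfolding r0_def by (simp add: field_simps)
  have kr0b': "k*(x+1) > 1 \<longleftrightarrow> x > r0" for x
    using k unfolding r0_def by (simp add: field_simps)
  have kr0': "1 - k*(x+1) < 0 \<longleftrightarrow> x > r0" for x
    using k unfolding r0_def by (simp add: field_simps)
  have r0u: "r0 < u"
  proof (rule ccontr)
    assume "\<not> r0 < u"
    hence "FF k 1 < FF k u"
      using u by (intro FF_inc) (auto simp: kr0 kr0b intro!: mult_pos_pos)
    with fu FF1 show False by simp
  qed
  have r01: "r0 > 1"
  proof (rule ccontr)
    assume "\<not> r0 > 1"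
    hence "FF k u < FF k 1"
      using u by (intro FF_dec) (auto simp: kr0' kr0b' intro!: mult_pos_neg)
    with fu FF1 show False by simp
  qed
  consider "r < 1" | "r = 1" | "1 < r" "r \<le> r0" | "r0 < r" "r < u" | "r = u" | "u < r"
    by linarith
  then show ?thesis
  proof cases
    case 1
    hence "FF k 1 < FF k r"
      using r r01 by (intro FF_dec) (auto simp: kr0 kr0b intro!: mult_neg_pos)
    with 1 u FF1 show ?thesis by simp
  next
    case 2 with u FF1 show ?thesis by simp
  next
    case 3
    hence "FF k 1 < FF k r"
      by (intro FF_inc) (auto simp: kr0 kr0b intro!: mult_pos_pos)
    with 3 r0u FF1 show ?thesis by simp
  next
    case 4
    hence "FF k u < FF k r"
      using r01 by (intro FF_dec) (auto simp: kr0' kr0b' intro!: mult_pos_neg)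
    with 4 fu show ?thesis by simp
  next
    case 5 with fu show ?thesis by simp
  next
    case 6
    hence "FF k r < FF k u"
      using r01 r0u by (intro FF_dec) (auto simp: kr0' kr0b' intro!: mult_pos_neg)
    with 6 fu show ?thesis by simp
  qed
qed



lemma xi_nu2_pos:
  assumes "is_model \<beta>"
  shows "deriv (deriv (xi \<beta>)) 1 > 0"
proof -
  define a where "a = (\<lambda>p. if 2 \<le> p then (\<beta> p)\<^sup>2 else 0)"
  have xi_eq: "xi \<beta> = (\<lambda>t. \<Sum>p. a p * t^p)"
    unfolding xi_def a_def by (intro ext suminf_cong) auto
  obtain \<epsilon> :: real where e: "\<epsilon> > 0" and sm0: "summable (\<lambda>p. if 2 \<le> p then (\<beta> p)\<^sup>2 * (1 + \<epsilon>) ^ p else 0)"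
    and bp: "\<exists>p\<ge>2. \<beta> p \<noteq> 0"
    using assms unfolding is_model_def by blast
  define K where "K = 1 + \<epsilon>"
  have sm: "summable (\<lambda>p. a p * K^p)"
    using sm0 unfolding a_def K_def by (rule summable_cong[THEN iffD1, rotated]) auto
  have smx: "summable (\<lambda>p. a p * x^p)" if "norm x < K" for x :: real
    using powser_inside[OF sm] that e by (auto simp: K_def)
  have smd: "summable (\<lambda>p. diffs a p * x^p)" if "norm x < K" for x :: real
    by (rule termdiff_converges[OF that smx])
  have D1: "deriv (xi \<beta>) x = (\<Sum>n. diffs a n * x^n)" if "x \<in> {-K<..<K}" for x
  proof -
    have "norm x < norm K" using that e by (auto simp: K_def)
    from termdiffs_strong[OF sm this] show ?thesis unfolding xi_eq by (rule DERIV_imp_deriv)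
  qed
  have "summable (\<lambda>p. diffs a p * (1 + \<epsilon>/2)^p)"
    using e by (intro smd) (auto simp: K_def)
  from termdiffs_strong[OF this, of 1]
  have "DERIV (\<lambda>x. \<Sum>n. diffs a n * x^n) 1 :> (\<Sum>n. diffs (diffs a) n * 1^n)"
    using e by simp
  hence "DERIV (deriv (xi \<beta>)) 1 :> (\<Sum>n. diffs (diffs a) n * 1^n)"
    by (rule has_field_derivative_transform_within_open[of _ _ _ "{-K<..<K}"])
      (use e D1 in \<open>auto simp: K_def\<close>)
  hence eq: "deriv (deriv (xi \<beta>)) 1 = (\<Sum>n. diffs (diffs a) n * 1^n)"
    by (rule DERIV_imp_deriv)
  have sm2: "summable (\<lambda>n. diffs (diffs a) n * 1^n)"
    by (rule termdiff_converges[of _ K]) (use e smd in \<open>auto simp: K_def\<close>)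
  obtain p where p: "p \<ge> 2" "\<beta> p \<noteq> 0" using bp by blast
  have "0 < (\<Sum>n. diffs (diffs a) n * 1^n)"
  proof (rule suminf_pos2[OF sm2, of "p - 2"])
    fix n show "0 \<le> diffs (diffs a) n * 1 ^ n" by (simp add: diffs_def a_def)
  next
    have "Suc (Suc (p - 2)) = p" using p by simp
    then show "0 < diffs (diffs a) (p - 2) * 1 ^ (p - 2)"
      using p by (simp add: diffs_def a_def)
  qed
  with eq show ?thesis by simp
qed

lemma phi_pos: "m > 0 \<Longrightarrow> c > 0 \<Longrightarrow> t < 1 + c/m \<Longrightarrow> phi m c t > 0"
  unfolding phi_def by (simp add: field_simps)

lemma A: assumes "m*(1-x)+c > 0" shows "((\<lambda>s. m*(1-s)+c) has_real_derivative -m) (at x)"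
  by (auto intro!: derivative_eq_intros)
lemma B: assumes "m*(1-x)+c > 0" shows "((\<lambda>s. ln (m*(1-s)+c)) has_real_derivative -m/(m*(1-x)+c)) (at x)"
  using DERIV_chain2[OF DERIV_ln_divide[OF assms] A[OF assms]] by simp
lemma C: assumes "m*(1-x)+c > 0" shows "((\<lambda>s. inverse (m*(1-s)+c)) has_real_derivative m/(m*(1-x)+c)^2) (at x)"
  using DERIV_inverse_fun[OF A[OF assms]] assms by (simp add: divide_simps power2_eq_square)

lemma eta_dd:
  assumes m: "m > 0" and c: "c > 0"
  shows "deriv (deriv (eta \<beta> m c)) 1 = 1 / c^2"
proof -
  define T where "T = 1 + c/m"
  have T1: "1 < T" using m c by (simp add: T_def)
  define F where "F = (\<lambda>s. inverse (m*(1-s)+c) / m)"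
  define g where "g = (\<lambda>s. F s - 1/(m*(m+c)))"
  define G where "G = (\<lambda>s. - ln (m*(1-s)+c)/m^2 - s/(m*(m+c)))"
  have pp: "m*(1-t)+c > 0" if "t < T" for t using phi_pos[OF m c] that by (simp add: T_def phi_def)
  have Fd: "(F has_real_derivative 1 / (phi m c x)\<^sup>2) (at x)" if "x < T" for x
  proof -
    have "(F has_real_derivative (m/(m*(1-x)+c)^2) / m) (at x)"
      unfolding F_def by (rule DERIV_cdivide[OF C[OF pp[OF that]]])
    then show ?thesis using m by (simp add: phi_def)
  qed
  have inner: "(LBINT \<tau>=ereal 0..ereal s. 1 / (phi m c \<tau>)\<^sup>2) = g s" if "s < T" for s
  proof -
    have "(LBINT \<tau>=ereal 0..ereal s. 1 / (phi m c \<tau>)\<^sup>2) = F s - F 0"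
    proof (rule interval_integral_FTC_finite)
      show "continuous_on {min 0 s..max 0 s} (\<lambda>\<tau>. 1 / (phi m c \<tau>)\<^sup>2)"
        unfolding phi_def
        apply (intro continuous_intros)
         apply (auto simp: phi_def)
        subgoal for \<tau> using pp[of \<tau>] T1 that by (auto simp: phi_def max_def split: if_splits)
        done
      fix x assume x: "min 0 s \<le> x" "x \<le> max 0 s"
      hence xT: "x < T" using that T1 by auto
      show "(F has_vector_derivative 1 / (phi m c x)\<^sup>2)
          (at x within {min 0 s..max 0 s})"
        using Fd[OF xT]
        by (simp add: has_real_derivative_iff_has_vector_derivative[symmetric] has_field_derivative_at_within)
    qed
    then show ?thesis by (simp add: g_def F_def field_simps)
  qed
  have gd: "(G has_real_derivative g x) (at x)" if "x < T" for x
  proof -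
    have "(G has_real_derivative (- (-m/(m*(1-x)+c)) / m^2 - 1/(m*(m+c)))) (at x)"
      unfolding G_def
      by (intro DERIV_diff DERIV_cdivide DERIV_minus B[OF pp[OF that]])
         (auto intro!: derivative_eq_intros)
    moreover have "- (-m/(m*(1-x)+c)) / m^2 - 1/(m*(m+c)) = g x"
      using m pp[OF that] by (simp add: g_def F_def power2_eq_square divide_simps)
    ultimately show ?thesis by simp
  qed
  have gdd: "(g has_real_derivative 1/c^2) (at 1)"
  proof -
    have "(g has_real_derivative 1 / (phi m c 1)\<^sup>2 - 0) (at 1)"
      unfolding g_def by (intro DERIV_diff Fd T1 DERIV_const)
    then show ?thesis by (simp add: phi_def)
  qed
  have eta_eq: "eta \<beta> m c t = xi \<beta> 1 - (G 1 - G t)" if "t < T" for t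
  proof -
    have "(LBINT s=ereal t..ereal 1. (LBINT \<tau>=ereal 0..ereal s. 1 / (phi m c \<tau>)\<^sup>2)) = G 1 - G t"
    proof (rule interval_integral_FTC_finite)
      have "continuous_on {min t 1..max t 1} g"
      proof (intro continuous_at_imp_continuous_on ballI)
        fix x assume "x \<in> {min t 1..max t 1}"
        hence xT: "x < T" using that T1 by auto
        show "isCont g x" unfolding g_def
          by (intro isCont_diff DERIV_isCont[OF Fd[OF xT]] continuous_const)
      qed
      then show "continuous_on {min t 1..max t 1} (\<lambda>s. LBINT \<tau>=ereal 0..ereal s. 1 / (phi m c \<tau>)\<^sup>2)"
        by (rule continuous_on_cong[THEN iffD1, rotated 2]) (use inner that T1 in auto)
      fix x assume "min t 1 \<le> x" "x \<le> max t 1"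
      hence xT: "x < T" using that T1 by auto
      show "(G has_vector_derivative (LBINT \<tau>=ereal 0..ereal x. 1 / (phi m c \<tau>)\<^sup>2))
          (at x within {min t 1..max t 1})"
        using gd[OF xT] inner[OF xT]
        by (simp add: has_real_derivative_iff_has_vector_derivative[symmetric] has_field_derivative_at_within)
    qed
    then show ?thesis unfolding eta_def by simp
  qed
  have ed: "deriv (eta \<beta> m c) x = g x" if "x \<in> {..<T}" for x
  proof -
    have "((\<lambda>t. xi \<beta> 1 - (G 1 - G t)) has_real_derivative g x) (at x)"
      using gd[of x] that by (auto intro!: derivative_eq_intros)
    hence "(eta \<beta> m c has_real_derivative g x) (at x)"
      by (rule has_field_derivative_transform_within_open[of _ _ _ "{..<T}"])
        (use that eta_eq in auto)
    then show ?thesis by (rule DERIV_imp_deriv)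
  qed
  have "(deriv (eta \<beta> m c) has_real_derivative 1/c^2) (at 1)"
    by (rule has_field_derivative_transform_within_open[OF gdd, of "{..<T}"])
      (use T1 ed in auto)
  then show ?thesis by (rule DERIV_imp_deriv)
qed


theorem lemma5p4:
  fixes \<beta> :: "nat \<Rightarrow> real" and m c :: real
  assumes "is_model \<beta>"
    and "xi \<beta> 1 = 1"
    and "\<not> (\<exists>a. \<forall>t\<in>{-1..1}. xi \<beta> t = a * t\<^sup>2)"
    and "m > 0" and "c > 0"
    and "xi \<beta> 1 = (1 / m) * ((1 / m) * ln ((c + m) / c) - 1 / (c + m))"
    and "1 / deriv (xi \<beta>) 1 = c * (c + m)"
  shows "deriv (deriv (eta \<beta> m c)) 1 \<ge> deriv (deriv (xi \<beta>)) 1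
         \<longleftrightarrow> (pure_like \<beta> \<or> critical \<beta>)"
proof -
  note m = assms(4) and c = assms(5)
  define k where "k = c * (c + m)"
  define u where "u = (c + m) / c"
  define n1 where "n1 = deriv (xi \<beta>) 1"
  define n2 where "n2 = deriv (deriv (xi \<beta>)) 1"
  have k0: "k > 0" using m c by (simp add: k_def)
  have n1: "n1 = 1 / k"
  proof -
    have "1 / n1 = k" using assms(7) by (simp add: n1_def k_def)
    with k0 show ?thesis by (auto simp: field_simps)
  qed
  have n2: "n2 > 0" using xi_nu2_pos[OF assms(1)] by (simp add: n2_def)
  define r where "r = n2 * k"
  have r0: "r > 0" using n2 k0 by (simp add: r_def)
  have u1: "u > 1" using m c by (simp add: u_def)
  have mm: "m^2 = ln u - m/(c+m)"
  proof -
    have "1 = (1 / m) * ((1 / m) * ln u - 1 / (c + m))" using assms(2,6) by (simp add: u_def)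
    then show ?thesis using m c by (simp add: field_simps power2_eq_square)
  qed
  have fu: "FF k u = 0"
  proof -
    have a: "(u - 1)/u = m/(c+m)" using m c by (simp add: u_def field_simps)
    have cm: "c + m > 0" "c*c*c + c*c*m > 0" using m c by (auto intro: add_pos_pos)
    have b: "k*(u-1)^2/u = m^2" using m c cm by (simp add: u_def k_def field_simps power2_eq_square)
    show ?thesis unfolding FF_def using a b mm by (simp add: diff_divide_distrib)
  qed
  have aba: "ABA \<beta> = FF k r"
  proof -
    have e2: "nu2 \<beta> = r / k" using k0 by (simp add: r_def nu2_def n2_def)
    have e1: "nu1 \<beta> = 1 / k" using n1 by (simp add: nu1_def n1_def)
    have "r / k / (1 / k) = r" using k0 by simp
    then show ?thesis
      unfolding ABA_def e1 e2 FF_def using k0 r0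
      by (simp add: field_simps power2_eq_square)
  qed
  have "deriv (deriv (eta \<beta> m c)) 1 \<ge> n2 \<longleftrightarrow> r \<le> u"
  proof -
    have "deriv (deriv (eta \<beta> m c)) 1 \<ge> n2 \<longleftrightarrow> n2 * c^2 \<le> 1"
      unfolding eta_dd[OF m c] using c by (simp add: pos_le_divide_eq)
    also have "\<dots> \<longleftrightarrow> (c+m)*(n2 * c^2) \<le> (c+m)*1"
      using m c by (simp add: mult_le_cancel_left_pos)
    also have "\<dots> \<longleftrightarrow> r \<le> u"
      using m c unfolding r_def k_def u_def by (simp add: field_simps power2_eq_square)
    finally show ?thesis .
  qed
  also have "\<dots> \<longleftrightarrow> FF k r \<ge> 0" using key[OF k0 u1 fu r0] by simp
  also have "\<dots> \<longleftrightarrow> pure_like \<beta> \<or> critical \<beta>"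
    unfolding pure_like_def critical_def aba by auto
  finally show ?thesis by (simp add: n2_def)
qed

end
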